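(* Let $\Lambda$ be a finite $k$-graph with no sources, and let $\{t_\lambda\}_{\lambda\in\Lambda}$ be a purely atomic representation of $C^*(\Lambda)$ on a separable Hilbert space $\mathcal H$, with associated projection valued measure $P$, such that $t_\lambda t_\lambda^*\neq0$ for all $\lambda\in\Lambda$. Then the representation is monic if and only if for every atom $x\in\Lambda^\infty$ (i.e. $P(\{x\})\ne 0$) the projection $P(\{x\})$ has one-dimensional range. Moreover, in this case the Borel measure $\mu(B)=\langle P(B)\xi,\xi\rangle$ on $\Lambda^\infty$ determined by a cyclic vector $\xi$ for $\{t_\lambda t_\lambda^*\}_{\lambda\in\Lambda}$ is atomic.
   Context: A $k$-graph ($k\ge1$) is a countable small category $\Lambda$ with a functor $d:\Lambda\to\mathbb N^k$ satisfying unique factorization: if $d(\lambda)=m+n$ there are unique $\mu,\nu$ with $\lambda=\mu\nu$, $d(\mu)=m$, $d(\nu)=n$. $\Lambda^0$ = vertices, $r,s$ = range, source, $\Lambda^n=d^{-1}(n)$, $v\Lambda^n=\{\lambda\in\Lambda^n:r(\lambda)=v\}$; finite: each $\Lambda^n$ finite; no sources: each $v\Lambda^n$ nonempty. Infinite paths are degree-preserving functors $x:\Omega_k\to\Lambda$, where $\Omega_k$ has objects $\mathbb N^k$, morphisms $(p,q)$, $p\le q$, $d(p,q)=q-p$; $\Lambda^\infty$ is their set. Cylinder sets $Z(\lambda)=\{x:x(0,d(\lambda))=\lambda\}$ generate the Borel $\sigma$-algebra. A representation of $C^*(\Lambda)$ is a family of partial isometries $\{t_\lambda\}$ on a Hilbert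 space satisfying (CK1) $\{t_v\}$ mutually orthogonal projections, (CK2) $t_\lambda t_\eta=t_{\lambda\eta}$ when $s(\lambda)=r(\eta)$, (CK3) $t_\lambda^*t_\lambda=t_{s(\lambda)}$, (CK4) $t_v=\sum_{\lambda\in v\Lambda^n}t_\lambda t_\lambda^*$. Its projection valued measure $P$ on Borel sets of $\Lambda^\infty$ satisfies $P(Z(\lambda))=t_\lambda t_\lambda^*$. Purely atomic: there is a Borel $\Omega$ with $P(\Lambda^\infty\setminus\Omega)=0$, $P(\{x\})\ne0$ for $x\in\Omega$, $\sum_{x\in\Omega}P(\{x\})=\mathrm{Id}$ strongly. The representation is monic if $t_\lambda\neq0$ for all $\lambda$ and there is $\xi\in\mathcal H$ with $\overline{\mathrm{span}}\{t_\lambda t_\lambda^*\xi:\lambda\in\Lambda\}=\mathcal H$ (such $\xi$ is called cyclic). *)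

theory Defs
  imports "HOL-Analysis.Analysis"
begin

text \<open>The distribution has no complex Hilbert spaces, so we introduce them as a type class:
  a real normed vector space with a complex scalar multiplication extending the real one and a
  complex inner product (linear in the first argument) inducing the norm.\<close>

class complex_inner = real_normed_vector +
  fixes scaleC :: "complex \<Rightarrow> 'a \<Rightarrow> 'a"
    and cinner :: "'a \<Rightarrow> 'a \<Rightarrow> complex"
  assumes scaleC_add_right: "scaleC a (x + y) = scaleC a x + scaleC a y"
    and scaleC_add_left: "scaleC (a + b) x = scaleC a x + scaleC b x"
    and scaleC_scaleC: "scaleC a (scaleC b x) = scaleC (a * b) x"
    and scaleC_one: "scaleC 1 x = x"
    and scaleR_scaleC: "scaleR r x = scaleC (complex_of_real r) x"
    and cinner_commute: "cinner x y = cnj (cinner y x)"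
    and cinner_add_left: "cinner (x + y) z = cinner x z + cinner y z"
    and cinner_scaleC_left: "cinner (scaleC a x) y = a * cinner x y"
    and cinner_ge_zero: "0 \<le> Re (cinner x x)"
    and cinner_eq_zero_iff: "cinner x x = 0 \<longleftrightarrow> x = 0"
    and norm_eq_sqrt_cinner: "norm x = sqrt (Re (cinner x x))"

class chilbert_space = complex_inner + complete_space

definition separable_hspace :: "'h::metric_space itself \<Rightarrow> bool" where
  "separable_hspace _ \<longleftrightarrow> (\<exists>D::'h set. countable D \<and> closure D = UNIV)"

definition bounded_clinear :: "('h::complex_inner \<Rightarrow> 'h) \<Rightarrow> bool" where
  "bounded_clinear T \<longleftrightarrow> bounded_linear T \<and> (\<forall>a x. T (scaleC a x) = scaleC a (T x))"

definition adj :: "('h::complex_inner \<Rightarrow> 'h) \<Rightarrow> ('h \<Rightarrow> 'h)" where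
  "adj T = (THE S. \<forall>x y. cinner (T x) y = cinner x (S y))"

definition zero_op :: "'h::complex_inner \<Rightarrow> 'h" where
  "zero_op = (\<lambda>_. 0)"

definition is_proj :: "('h::complex_inner \<Rightarrow> 'h) \<Rightarrow> bool" where
  "is_proj P \<longleftrightarrow> bounded_clinear P \<and> P \<circ> P = P \<and> adj P = P"

definition partial_isometry :: "('h::complex_inner \<Rightarrow> 'h) \<Rightarrow> bool" where
  "partial_isometry T \<longleftrightarrow> bounded_clinear T \<and> is_proj (adj T \<circ> T)"

definition cspan :: "'h::complex_inner set \<Rightarrow> 'h set" where
  "cspan S = {y. \<exists>F c. finite F \<and> F \<subseteq> S \<and> y = (\<Sum>v\<in>F. scaleC (c v) v)}"

definition one_dimensional :: "'h::complex_inner set \<Rightarrow> bool" where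
  "one_dimensional V \<longleftrightarrow> (\<exists>v. v \<noteq> 0 \<and> V = {scaleC a v | a. True})"

text \<open>Degrees: \<open>\<nat>^k\<close> is represented by functions \<open>nat \<Rightarrow> nat\<close> vanishing from index k on;
  the order is the pointwise one.\<close>
definition degs :: "nat \<Rightarrow> (nat \<Rightarrow> nat) set" where
  "degs k = {n. \<forall>i\<ge>k. n i = 0}"

text \<open>A k-graph is given by its set of morphisms \<open>L\<close> (countable), range and source maps \<open>r s\<close>
  (objects are identified with their identity morphisms), a composition \<open>c\<close> and a degree map \<open>d\<close>.\<close>
definition kgraph ::
  "nat \<Rightarrow> 'a set \<Rightarrow> ('a \<Rightarrow> 'a) \<Rightarrow> ('a \<Rightarrow> 'a) \<Rightarrow> ('a \<Rightarrow> 'a \<Rightarrow> 'a) \<Rightarrow> ('a \<Rightarrow> nat \<Rightarrow> nat) \<Rightarrow> bool"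
where
  "kgraph k L r s c d \<longleftrightarrow>
     1 \<le> k \<and> countable L \<and>
     (\<forall>l\<in>L. r l \<in> L \<and> s l \<in> L \<and>
        r (r l) = r l \<and> s (r l) = r l \<and> r (s l) = s l \<and> s (s l) = s l \<and>
        c (r l) l = l \<and> c l (s l) = l) \<and>
     (\<forall>l\<in>L. \<forall>m1\<in>L. s l = r m1 \<longrightarrow>
        c l m1 \<in> L \<and> r (c l m1) = r l \<and> s (c l m1) = s m1) \<and>
     (\<forall>l\<in>L. \<forall>m1\<in>L. \<forall>n1\<in>L. s l = r m1 \<longrightarrow> s m1 = r n1 \<longrightarrow>
        c (c l m1) n1 = c l (c m1 n1)) \<and>
     (\<forall>l\<in>L. d l \<in> degs k) \<and>
     (\<forall>l\<in>L. \<forall>m1\<in>L. s l = r m1 \<longrightarrow> d (c l m1) = (\<lambda>i. d l i + d m1 i)) \<and>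
     (\<forall>l\<in>L. \<forall>m n. d l = (\<lambda>i. m i + n i) \<longrightarrow>
        (\<exists>!p. fst p \<in> L \<and> snd p \<in> L \<and> s (fst p) = r (snd p) \<and> c (fst p) (snd p) = l \<and>
              d (fst p) = m \<and> d (snd p) = n))"

definition vertices :: "'a set \<Rightarrow> ('a \<Rightarrow> 'a) \<Rightarrow> 'a set" where
  "vertices L r = r ` L"

definition kgraph_finite :: "nat \<Rightarrow> 'a set \<Rightarrow> ('a \<Rightarrow> nat \<Rightarrow> nat) \<Rightarrow> bool" where
  "kgraph_finite k L d \<longleftrightarrow> (\<forall>n\<in>degs k. finite {l\<in>L. d l = n})"

definition no_sources :: "nat \<Rightarrow> 'a set \<Rightarrow> ('a \<Rightarrow> 'a) \<Rightarrow> ('a \<Rightarrow> nat \<Rightarrow> nat) \<Rightarrow> bool" where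
  "no_sources k L r d \<longleftrightarrow> (\<forall>v\<in>vertices L r. \<forall>n\<in>degs k. \<exists>l\<in>L. r l = v \<and> d l = n)"

text \<open>Infinite paths: degree preserving functors \<open>\<Omega>_k \<rightarrow> \<Lambda>\<close>; the morphism \<open>(p,q)\<close> of \<open>\<Omega>_k\<close>
  (\<open>p \<le> q\<close>) is sent to \<open>x p q\<close>, the object \<open>p\<close> to the identity \<open>x p p\<close>. Outside the
  morphisms of \<open>\<Omega>_k\<close> the function is \<open>undefined\<close> (extensionality).\<close>
definition kpaths ::
  "nat \<Rightarrow> 'a set \<Rightarrow> ('a \<Rightarrow> 'a) \<Rightarrow> ('a \<Rightarrow> 'a) \<Rightarrow> ('a \<Rightarrow> 'a \<Rightarrow> 'a) \<Rightarrow> ('a \<Rightarrow> nat \<Rightarrow> nat)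
   \<Rightarrow> ((nat \<Rightarrow> nat) \<Rightarrow> (nat \<Rightarrow> nat) \<Rightarrow> 'a) set"
where
  "kpaths k L r s c d =
     {x. (\<forall>p\<in>degs k. \<forall>q\<in>degs k. p \<le> q \<longrightarrow>
            x p q \<in> L \<and> d (x p q) = (\<lambda>i. q i - p i) \<and> r (x p q) = x p p \<and> s (x p q) = x q q) \<and>
         (\<forall>p\<in>degs k. \<forall>q\<in>degs k. \<forall>w\<in>degs k. p \<le> q \<longrightarrow> q \<le> w \<longrightarrow> x p w = c (x p q) (x q w)) \<and>
         (\<forall>p q. \<not> (p \<in> degs k \<and> q \<in> degs k \<and> p \<le> q) \<longrightarrow> x p q = undefined)}"

definition cylinder ::
  "nat \<Rightarrow> 'a set \<Rightarrow> ('a \<Rightarrow> 'a) \<Rightarrow> ('a \<Rightarrow> 'a) \<Rightarrow> ('a \<Rightarrow> 'a \<Rightarrow> 'a) \<Rightarrow> ('a \<Rightarrow> nat \<Rightarrow> nat) \<Rightarrow> 'a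
   \<Rightarrow> ((nat \<Rightarrow> nat) \<Rightarrow> (nat \<Rightarrow> nat) \<Rightarrow> 'a) set"
where
  "cylinder k L r s c d l = {x \<in> kpaths k L r s c d. x (\<lambda>_. 0) (d l) = l}"

definition kpath_borel ::
  "nat \<Rightarrow> 'a set \<Rightarrow> ('a \<Rightarrow> 'a) \<Rightarrow> ('a \<Rightarrow> 'a) \<Rightarrow> ('a \<Rightarrow> 'a \<Rightarrow> 'a) \<Rightarrow> ('a \<Rightarrow> nat \<Rightarrow> nat)
   \<Rightarrow> ((nat \<Rightarrow> nat) \<Rightarrow> (nat \<Rightarrow> nat) \<Rightarrow> 'a) set set"
where
  "kpath_borel k L r s c d =
     sigma_sets (kpaths k L r s c d) {cylinder k L r s c d l | l. l \<in> L}"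

definition ck_rep ::
  "nat \<Rightarrow> 'a set \<Rightarrow> ('a \<Rightarrow> 'a) \<Rightarrow> ('a \<Rightarrow> 'a) \<Rightarrow> ('a \<Rightarrow> 'a \<Rightarrow> 'a) \<Rightarrow> ('a \<Rightarrow> nat \<Rightarrow> nat)
   \<Rightarrow> ('a \<Rightarrow> 'h::chilbert_space \<Rightarrow> 'h) \<Rightarrow> bool"
where
  "ck_rep k L r s c d t \<longleftrightarrow>
     (\<forall>l\<in>L. partial_isometry (t l)) \<and>
     \<comment> \<open>(CK1)\<close>
     (\<forall>v\<in>vertices L r. is_proj (t v)) \<and>
     (\<forall>v\<in>vertices L r. \<forall>w\<in>vertices L r. v \<noteq> w \<longrightarrow> t v \<circ> t w = zero_op) \<and>
     \<comment> \<open>(CK2)\<close>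
     (\<forall>l\<in>L. \<forall>e1\<in>L. s l = r e1 \<longrightarrow> t l \<circ> t e1 = t (c l e1)) \<and>
     \<comment> \<open>(CK3)\<close>
     (\<forall>l\<in>L. adj (t l) \<circ> t l = t (s l)) \<and>
     \<comment> \<open>(CK4)\<close>
     (\<forall>v\<in>vertices L r. \<forall>n\<in>degs k. \<forall>h.
        t v h = (\<Sum>l\<in>{l\<in>L. r l = v \<and> d l = n}. t l (adj (t l) h)))"

definition pvm :: "'p set \<Rightarrow> 'p set set \<Rightarrow> ('p set \<Rightarrow> 'h::chilbert_space \<Rightarrow> 'h) \<Rightarrow> bool" where
  "pvm X A P \<longleftrightarrow>
     (\<forall>B\<in>A. is_proj (P B)) \<and> P {} = zero_op \<and> P X = id \<and>
     (\<forall>B\<in>A. \<forall>C\<in>A. P (B \<inter> C) = P B \<circ> P C) \<and>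
     (\<forall>F. range F \<subseteq> A \<longrightarrow> disjoint_family F \<longrightarrow>
        (\<forall>h. (\<lambda>n. P (F n) h) sums P (\<Union>n. F n) h))"

definition purely_atomic :: "'p set \<Rightarrow> 'p set set \<Rightarrow> ('p set \<Rightarrow> 'h::chilbert_space \<Rightarrow> 'h) \<Rightarrow> bool" where
  "purely_atomic X A P \<longleftrightarrow>
     (\<exists>\<Omega>\<in>A. P (X - \<Omega>) = zero_op \<and> (\<forall>x\<in>\<Omega>. P {x} \<noteq> zero_op) \<and>
        (\<forall>h. ((\<lambda>x. P {x} h) has_sum h) \<Omega>))"

definition cyclic_vector :: "'a set \<Rightarrow> ('a \<Rightarrow> 'h::chilbert_space \<Rightarrow> 'h) \<Rightarrow> 'h \<Rightarrow> bool" where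
  "cyclic_vector L t \<xi> \<longleftrightarrow> closure (cspan {t l (adj (t l) \<xi>) | l. l \<in> L}) = UNIV"

definition monic_rep :: "'a set \<Rightarrow> ('a \<Rightarrow> 'h::chilbert_space \<Rightarrow> 'h) \<Rightarrow> bool" where
  "monic_rep L t \<longleftrightarrow> (\<forall>l\<in>L. t l \<noteq> zero_op) \<and> (\<exists>\<xi>. cyclic_vector L t \<xi>)"

definition atomic_measure :: "'p measure \<Rightarrow> bool" where
  "atomic_measure M \<longleftrightarrow>
     (\<exists>\<Omega>\<in>sets M. emeasure M (space M - \<Omega>) = 0 \<and>
        (\<forall>x\<in>\<Omega>. {x} \<in> sets M \<and> emeasure M {x} \<noteq> 0))"

definition vector_measure :: "'p set \<Rightarrow> 'p set set \<Rightarrow> ('p set \<Rightarrow> 'h::chilbert_space \<Rightarrow> 'h) \<Rightarrow> 'h \<Rightarrow> 'p measure" where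
  "vector_measure X A P \<xi> = measure_of X A (\<lambda>B. ennreal (Re (cinner (P B \<xi>) \<xi>)))"

end

theory Submission
  imports Defs
begin

context chilbert_space begin
subclass banach by standard
end

lemma scaleC_zero_left[simp]: "scaleC 0 (x::'h::complex_inner) = 0"
proof -
  have "scaleC 0 x = scaleC 0 x + scaleC 0 x" using scaleC_add_left[of 0 0 x] by simp
  thus ?thesis by simp
qed

lemma scaleC_zero_right[simp]: "scaleC a (0::'h::complex_inner) = 0"
proof -
  have "scaleC a (0::'h) = scaleC a 0 + scaleC a 0" using scaleC_add_right[of a 0 0] by simp
  thus ?thesis by simp
qed

lemma scaleC_minus_left: "scaleC (- a) (x::'h::complex_inner) = - scaleC a x"
proof -
  have "scaleC a x + scaleC (-a) x = 0" using scaleC_add_left[of a "-a" x] by simp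
  thus ?thesis by (simp add: eq_neg_iff_add_eq_0 add.commute)
qed

lemma scaleC_minus_right: "scaleC a (- x::'h::complex_inner) = - scaleC a x"
proof -
  have "scaleC a x + scaleC a (-x) = 0" using scaleC_add_right[of a x "-x"] by simp
  thus ?thesis by (simp add: eq_neg_iff_add_eq_0 add.commute)
qed

lemma scaleC_diff_right: "scaleC a (x - y::'h::complex_inner) = scaleC a x - scaleC a y"
  using scaleC_add_right[of a x "-y"] scaleC_minus_right[of a y] by simp

lemma scaleC_diff_left: "scaleC (a - b) (x::'h::complex_inner) = scaleC a x - scaleC b x"
  using scaleC_add_left[of a "-b" x] scaleC_minus_left[of b x] by simp

lemma cinner_add_right: "cinner (x::'h::complex_inner) (y + z) = cinner x y + cinner x z"
  by (metis cinner_commute cinner_add_left complex_cnj_add)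

lemma cinner_scaleC_right: "cinner (x::'h::complex_inner) (scaleC a y) = cnj a * cinner x y"
  by (metis cinner_commute cinner_scaleC_left complex_cnj_mult)

lemma cinner_zero_left[simp]: "cinner 0 (x::'h::complex_inner) = 0"
  using cinner_scaleC_left[of 0 x x] by simp

lemma cinner_zero_right[simp]: "cinner (x::'h::complex_inner) 0 = 0"
  using cinner_scaleC_right[of x 0 x] by simp

lemma minus_scaleC: "- (x::'h::complex_inner) = scaleC (-1) x"
  by (metis scaleC_minus_left scaleC_one)

lemma cinner_minus_left: "cinner (- x) (y::'h::complex_inner) = - cinner x y"
  by (simp add: minus_scaleC cinner_scaleC_left)

lemma cinner_minus_right: "cinner x (- y::'h::complex_inner) = - cinner x y"
  by (simp add: minus_scaleC cinner_scaleC_right)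

lemma cinner_diff_left: "cinner (x - y) (z::'h::complex_inner) = cinner x z - cinner y z"
  using cinner_add_left[of x "-y" z] by (simp add: cinner_minus_left)

lemma cinner_diff_right: "cinner x (y - z::'h::complex_inner) = cinner x y - cinner x z"
  using cinner_add_right[of x y "-z"] by (simp add: cinner_minus_right)

lemma cinner_self_Im: "Im (cinner x (x::'h::complex_inner)) = 0"
proof -
  have "Im (cinner x x) = - Im (cinner x x)" using arg_cong[OF cinner_commute[of x x], of Im] by simp
  thus ?thesis by simp
qed

lemma norm_sq_cinner: "(norm (x::'h::complex_inner))^2 = Re (cinner x x)"
  using norm_eq_sqrt_cinner[of x] cinner_ge_zero[of x] by simp

lemma cinner_self: "cinner x (x::'h::complex_inner) = complex_of_real ((norm x)^2)"
  using cinner_self_Im[of x] norm_sq_cinner[of x] by (simp add: complex_eq_iff)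

lemma norm_scaleC: "norm (scaleC a (x::'h::complex_inner)) = cmod a * norm x"
proof -
  have e: "cinner (scaleC a x) (scaleC a x) = a * cnj a * cinner x x"
    by (simp add: cinner_scaleC_left cinner_scaleC_right mult.assoc)
  have "(norm (scaleC a x))^2 = Re (a * cnj a * cinner x x)"
    unfolding norm_sq_cinner e ..
  also have "a * cnj a * cinner x x = complex_of_real ((cmod a)^2 * (norm x)^2)"
    unfolding cinner_self complex_mult_cnj cmod_power2 by simp
  also have "Re \<dots> = (cmod a)^2 * (norm x)^2" by simp
  also have "\<dots> = (cmod a * norm x)^2" by (simp add: power_mult_distrib)
  finally show ?thesis by (simp add: power2_eq_iff_nonneg)
qed

lemma Re_cinner_polar: "Re (cinner x (y::'h::complex_inner)) = ((norm (x+y))^2 - (norm (x-y))^2) / 4"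
proof -
  have "Re (cinner y x) = Re (cinner x y)" using cinner_commute[of y x] by simp
  thus ?thesis
    by (simp add: norm_sq_cinner cinner_add_left cinner_add_right cinner_diff_left cinner_diff_right)
qed

lemma Im_cinner: "Im (cinner x (y::'h::complex_inner)) = Re (cinner x (scaleC \<i> y))"
  by (simp add: cinner_scaleC_right)

lemma tendsto_Re_cinner:
  assumes "(f \<longlongrightarrow> a) F"
  shows "((\<lambda>z. Re (cinner (f z) (w::'h::complex_inner))) \<longlongrightarrow> Re (cinner a w)) F"
  unfolding Re_cinner_polar
  by (intro tendsto_intros assms) simp

lemma tendsto_cinner_left:
  assumes "(f \<longlongrightarrow> a) F"
  shows "((\<lambda>z. cinner (f z) (w::'h::complex_inner)) \<longlongrightarrow> cinner a w) F"
  unfolding tendsto_complex_iff Im_cinner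
  using tendsto_Re_cinner[OF assms] by blast

lemma bounded_linear_scaleC_right: "bounded_linear (scaleC a :: 'h::complex_inner \<Rightarrow> 'h)"
proof (rule bounded_linear_intro[where K="cmod a"])
  fix x y :: 'h and r :: real
  show "scaleC a (x + y) = scaleC a x + scaleC a y" by (rule scaleC_add_right)
  show "scaleC a (r *\<^sub>R x) = r *\<^sub>R scaleC a x"
    by (simp add: scaleR_scaleC scaleC_scaleC mult.commute)
  show "norm (scaleC a x) \<le> norm x * cmod a" by (simp add: norm_scaleC mult.commute)
qed

lemma bounded_linear_scaleC_left: "bounded_linear (\<lambda>a. scaleC a (w::'h::complex_inner))"
proof (rule bounded_linear_intro[where K="norm w"])
  fix x y :: complex and r :: real
  show "scaleC (x + y) w = scaleC x w + scaleC y w" by (rule scaleC_add_left)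
  show "scaleC (r *\<^sub>R x) w = r *\<^sub>R scaleC x w"
    by (simp add: scaleR_scaleC scaleC_scaleC scaleR_conv_of_real)
  show "norm (scaleC x w) \<le> norm x * norm w" by (simp add: norm_scaleC)
qed

lemma scaleC_sum_left: "scaleC (\<Sum>i\<in>F. a i) (w::'h::complex_inner) = (\<Sum>i\<in>F. scaleC (a i) w)"
  by (induction F rule: infinite_finite_induct) (auto simp: scaleC_add_left)

lemma closed_line: "closed {scaleC a (w::'h::complex_inner) | a. True}"
proof (cases "w = 0")
  case True
  then have "{scaleC a (w::'h::complex_inner) | a. True} = {0}" by auto
  thus ?thesis by simp
next
  case False
  have wpos: "cinner w w \<noteq> 0" using False cinner_eq_zero_iff by blast
  have eq: "{scaleC a w | a. True} = {y. y = scaleC (cinner y w / cinner w w) w}"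
  proof (safe)
    fix a show "scaleC a w = scaleC (cinner (scaleC a w) w / cinner w w) w"
      using wpos by (simp add: cinner_scaleC_left)
  qed auto
  have c1: "continuous_on UNIV (\<lambda>y::'h. cinner y w / cinner w w)"
    unfolding continuous_on_def
    using wpos by (intro ballI tendsto_intros tendsto_cinner_left tendsto_ident_at) auto
  have c2: "continuous_on UNIV (\<lambda>y::'h. scaleC (cinner y w / cinner w w) w)"
    using continuous_on_compose[OF c1 linear_continuous_on[OF bounded_linear_scaleC_left[of w]]]
    by (simp add: o_def)
  show ?thesis unfolding eq
    by (intro closed_Collect_eq continuous_on_id c2)
qed


definition Nv :: "nat \<Rightarrow> nat \<Rightarrow> nat \<Rightarrow> nat" where
  "Nv k n = (\<lambda>i. if i < k then n else 0)"

definition zcyl where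
  "zcyl k L r s c d x n = cylinder k L r s c d (x (\<lambda>_. 0) (Nv k n))"

lemma zero_degs[simp]: "(\<lambda>_. 0::nat) \<in> degs k" by (simp add: degs_def)
lemma Nv_degs[simp]: "Nv k n \<in> degs k" by (simp add: degs_def Nv_def)

lemma kpath_facts:
  assumes "x \<in> kpaths k L r s c d" "p \<in> degs k" "q \<in> degs k" "w \<in> degs k" "p \<le> q" "q \<le> w"
  shows "x p q \<in> L" "x q w \<in> L" "s (x p q) = r (x q w)" "c (x p q) (x q w) = x p w"
    "d (x p q) = (\<lambda>i. q i - p i)" "d (x q w) = (\<lambda>i. w i - q i)" "d (x p w) = (\<lambda>i. w i - p i)"
    "x p w \<in> L"
proof -
  have w: "p \<le> w" using assms order_trans by blast
  have A: "\<And>p q. p\<in>degs k \<Longrightarrow> q\<in>degs k \<Longrightarrow> p \<le> q \<Longrightarrow>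
            x p q \<in> L \<and> d (x p q) = (\<lambda>i. q i - p i) \<and> r (x p q) = x p p \<and> s (x p q) = x q q"
    and B: "\<And>p q w. p\<in>degs k \<Longrightarrow> q\<in>degs k \<Longrightarrow> w\<in>degs k \<Longrightarrow> p \<le> q \<Longrightarrow> q \<le> w \<Longrightarrow>
            x p w = c (x p q) (x q w)"
    using assms(1) unfolding kpaths_def mem_Collect_eq by (meson, meson)
  note a1 = A[OF assms(2,3,5)] and a2 = A[OF assms(3,4,6)] and a3 = A[OF assms(2,4) w]
  show "x p q \<in> L" "x q w \<in> L" "d (x p q) = (\<lambda>i. q i - p i)" "d (x q w) = (\<lambda>i. w i - q i)"
    "d (x p w) = (\<lambda>i. w i - p i)" "x p w \<in> L"
    using a1 a2 a3 by blast+
  show "s (x p q) = r (x q w)" using a1 a2 by simp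
  show "c (x p q) (x q w) = x p w" using B[OF assms(2-6)] by simp
qed

lemma uf:
  assumes "kgraph k L r s c d" "l \<in> L" "d l = (\<lambda>i. m i + n i)"
    "a \<in> L" "b \<in> L" "s a = r b" "c a b = l" "d a = m" "d b = n"
    "a' \<in> L" "b' \<in> L" "s a' = r b'" "c a' b' = l" "d a' = m" "d b' = n"
  shows "a = a' \<and> b = b'"
proof -
  have "\<forall>l\<in>L. \<forall>m n. d l = (\<lambda>i. m i + n i) \<longrightarrow>
        (\<exists>!p. fst p \<in> L \<and> snd p \<in> L \<and> s (fst p) = r (snd p) \<and> c (fst p) (snd p) = l \<and>
              d (fst p) = m \<and> d (snd p) = n)"
    using assms(1) unfolding kgraph_def by (elim conjE) assumption
  hence "\<exists>!p. fst p \<in> L \<and> snd p \<in> L \<and> s (fst p) = r (snd p) \<and> c (fst p) (snd p) = l \<and>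
              d (fst p) = m \<and> d (snd p) = n"
    using assms(2,3) by blast
  then obtain p0 where "\<And>p. fst p \<in> L \<and> snd p \<in> L \<and> s (fst p) = r (snd p) \<and> c (fst p) (snd p) = l \<and>
              d (fst p) = m \<and> d (snd p) = n \<Longrightarrow> p = p0" by blast
  from this[of "(a,b)"] this[of "(a',b')"] assms(4-) have "(a, b) = (a', b')" by simp
  thus ?thesis by simp
qed

lemma KF2:
  assumes kg: "kgraph k L r s c d" and x: "x \<in> kpaths k L r s c d" and y: "y \<in> kpaths k L r s c d"
    and "p \<in> degs k" "q \<in> degs k" "w \<in> degs k" "p \<le> q" "q \<le> w"
    and eq: "y p w = x p w"
  shows "y p q = x p q \<and> y q w = x q w"
proof -
  note X = kpath_facts[OF x assms(4-8)]
  note Y = kpath_facts[OF y assms(4-8)]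
  have "d (x p w) = (\<lambda>i. (q i - p i) + (w i - q i))"
    unfolding X(7)
  proof
    fix i have "p i \<le> q i" "q i \<le> w i" using assms(7,8) unfolding le_fun_def by auto
    thus "w i - p i = (q i - p i) + (w i - q i)" by simp
  qed
  from uf[OF kg X(8) this X(1) X(2) X(3) X(4) X(5) X(6) Y(1) Y(2) Y(3)] Y(4-6) eq
  show ?thesis by simp
qed

lemma KF:
  assumes kg: "kgraph k L r s c d" and x: "x \<in> kpaths k L r s c d" and y: "y \<in> kpaths k L r s c d"
    and "p \<in> degs k" "q \<in> degs k" "M \<in> degs k" "p \<le> q" "q \<le> M"
    and eq: "y (\<lambda>_. 0) M = x (\<lambda>_. 0) M"
  shows "y p q = x p q"
proof -
  have z: "(\<lambda>_. 0) \<le> p" "(\<lambda>_. 0) \<le> q" by (auto simp: le_fun_def)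
  have "y (\<lambda>_. 0) q = x (\<lambda>_. 0) q"
    using KF2[OF kg x y, of "\<lambda>_. 0" q M, OF zero_degs assms(5,6) z(2) assms(8) eq] by (rule conjunct1)
  from KF2[OF kg x y, of "\<lambda>_. 0" p q, OF zero_degs assms(4,5) z(1) assms(7) this]
  show ?thesis by (rule conjunct2)
qed

lemma Nv_d:
  assumes "x \<in> kpaths k L r s c d"
  shows "d (x (\<lambda>_. 0) (Nv k n)) = Nv k n" "x (\<lambda>_. 0) (Nv k n) \<in> L"
proof -
  have z: "(\<lambda>_. 0) \<le> Nv k n" by (auto simp: le_fun_def)
  note F = kpath_facts[OF assms, of "\<lambda>_. 0" "Nv k n" "Nv k n", OF zero_degs Nv_degs Nv_degs z order_refl]
  show "d (x (\<lambda>_. 0) (Nv k n)) = Nv k n" using F(5) by simp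
  show "x (\<lambda>_. 0) (Nv k n) \<in> L" using F(1) .
qed

lemma zcyl_eq:
  assumes "x \<in> kpaths k L r s c d"
  shows "zcyl k L r s c d x n = {y \<in> kpaths k L r s c d. y (\<lambda>_. 0) (Nv k n) = x (\<lambda>_. 0) (Nv k n)}"
  unfolding zcyl_def cylinder_def Nv_d(1)[OF assms] by (rule refl)

lemma zcyl_L:
  assumes "x \<in> kpaths k L r s c d"
  shows "x (\<lambda>_. 0) (Nv k n) \<in> L"
  by (rule Nv_d(2)[OF assms])

lemma zcyl_mem: "x \<in> kpaths k L r s c d \<Longrightarrow> x \<in> zcyl k L r s c d x n"
  by (simp add: zcyl_eq)

lemma zcyl_sub: "x \<in> kpaths k L r s c d \<Longrightarrow> zcyl k L r s c d x n \<subseteq> kpaths k L r s c d"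
  by (simp add: zcyl_eq)

lemma zcyl_antimono:
  assumes kg: "kgraph k L r s c d" and x: "x \<in> kpaths k L r s c d" and "m \<le> n"
  shows "zcyl k L r s c d x n \<subseteq> zcyl k L r s c d x m"
proof
  fix y assume "y \<in> zcyl k L r s c d x n"
  hence y: "y \<in> kpaths k L r s c d" "y (\<lambda>_. 0) (Nv k n) = x (\<lambda>_. 0) (Nv k n)"
    using zcyl_eq[OF x] by auto
  have le: "Nv k m \<le> Nv k n" using assms(3) by (auto simp: le_fun_def Nv_def)
  have z: "(\<lambda>_. 0) \<le> Nv k m" by (auto simp: le_fun_def)
  have "y (\<lambda>_. 0) (Nv k m) = x (\<lambda>_. 0) (Nv k m)"
    by (rule KF[OF kg x y(1), of "\<lambda>_. 0" "Nv k m" "Nv k n", OF zero_degs Nv_degs Nv_degs z le y(2)])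
  thus "y \<in> zcyl k L r s c d x m" using zcyl_eq[OF x] y(1) by auto
qed

lemma zcyl_Inter:
  assumes kg: "kgraph k L r s c d" and x: "x \<in> kpaths k L r s c d"
  shows "(\<Inter>n. zcyl k L r s c d x n) = {x}"
proof
  show "{x} \<subseteq> (\<Inter>n. zcyl k L r s c d x n)" using zcyl_mem[OF x] by auto
  show "(\<Inter>n. zcyl k L r s c d x n) \<subseteq> {x}"
  proof
    fix y assume yin: "y \<in> (\<Inter>n. zcyl k L r s c d x n)"
    hence y: "y \<in> kpaths k L r s c d" using zcyl_eq[OF x] by auto
    have "y p q = x p q" for p q
    proof (cases "p \<in> degs k \<and> q \<in> degs k \<and> p \<le> q")
      case True
      define n where "n = (\<Sum>i<k. q i)"
      have "q \<le> Nv k n"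
      proof (unfold le_fun_def, intro allI)
        fix i show "q i \<le> Nv k n i"
        proof (cases "i < k")
          case True thus ?thesis unfolding Nv_def n_def
            by (simp add: member_le_sum)
        next
          case False thus ?thesis using \<open>p \<in> degs k \<and> q \<in> degs k \<and> p \<le> q\<close>
            by (simp add: degs_def Nv_def)
        qed
      qed
      moreover have "y (\<lambda>_. 0) (Nv k n) = x (\<lambda>_. 0) (Nv k n)"
        using yin zcyl_eq[OF x] by auto
      moreover have "p \<in> degs k" "q \<in> degs k" "p \<le> q" using True by auto
      ultimately show ?thesis using KF[OF kg x y _ _ Nv_degs, of p q n] by blast
    next
      case False
      have "\<And>z. z \<in> kpaths k L r s c d \<Longrightarrow> \<forall>p q. \<not> (p \<in> degs k \<and> q \<in> degs k \<and> p \<le> q) \<longrightarrow> z p q = undefined"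
        unfolding kpaths_def mem_Collect_eq by (elim conjE)
      thus ?thesis using x y False by metis
    qed
    thus "y \<in> {x}" by (auto intro!: ext)
  qed
qed

lemma borel_sa:
  "sigma_algebra (kpaths k L r s c d) (kpath_borel k L r s c d)"
  unfolding kpath_borel_def
  by (rule sigma_algebra_sigma_sets) (auto simp: cylinder_def)

lemma cyl_borel: "l \<in> L \<Longrightarrow> cylinder k L r s c d l \<in> kpath_borel k L r s c d"
  unfolding kpath_borel_def by (rule sigma_sets.Basic) auto

lemma zcyl_borel: "x \<in> kpaths k L r s c d \<Longrightarrow> zcyl k L r s c d x n \<in> kpath_borel k L r s c d"
  unfolding zcyl_def by (rule cyl_borel) (rule zcyl_L)

lemma singleton_borel:
  assumes kg: "kgraph k L r s c d" and x: "x \<in> kpaths k L r s c d"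
  shows "{x} \<in> kpath_borel k L r s c d"
proof -
  interpret sigma_algebra "kpaths k L r s c d" "kpath_borel k L r s c d" by (rule borel_sa)
  have "(\<Inter>n\<in>UNIV. zcyl k L r s c d x n) \<in> kpath_borel k L r s c d"
    by (rule countable_INT) (auto intro: zcyl_borel[OF x])
  thus ?thesis using zcyl_Inter[OF kg x] by simp
qed


lemma adj_eq:
  assumes "\<forall>x y. cinner (T x) y = cinner x (S y)"
  shows "adj T = (S :: 'h::complex_inner \<Rightarrow> 'h)"
  unfolding adj_def
proof (rule the_equality)
  show "\<forall>x y. cinner (T x) y = cinner x (S y)" by (rule assms)
  fix S' assume S': "\<forall>x y. cinner (T x) y = cinner x (S' y)"
  show "S' = S"
  proof
    fix y
    have cz: "cinner x (S' y - S y) = 0" for x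
    proof -
      have "cinner x (S' y) = cinner (T x) y" using S' by metis
      moreover have "cinner x (S y) = cinner (T x) y" using assms by metis
      ultimately show ?thesis by (simp add: cinner_diff_right)
    qed
    have "S' y - S y = 0" by (rule iffD1[OF cinner_eq_zero_iff cz])
    thus "S' y = S y" by simp
  qed
qed

lemma adj_none:
  assumes "\<not> (\<exists>S. \<forall>x y. cinner (T x) y = cinner x (S y))"
  shows "adj T = The (\<lambda>_::'h::complex_inner \<Rightarrow> 'h. False)"
proof -
  have "(\<lambda>S. \<forall>x y. cinner (T x) y = cinner x (S y)) = (\<lambda>_. False)"
    by (rule ext) (use assms in blast)
  thus ?thesis unfolding adj_def by simp
qed

lemma proj_sa:
  assumes "is_proj T" "\<exists>S. \<forall>x y. cinner (T x) y = cinner x (S y)"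
  shows "cinner (T x) y = cinner x (T y)"
proof -
  obtain S where S: "\<forall>x y. cinner (T x) y = cinner x (S y)" using assms(2) by blast
  have "adj T = S" using adj_eq[OF S] .
  moreover have "adj T = T" using assms(1) unfolding is_proj_def by simp
  ultimately show ?thesis using S by simp
qed

lemma proj_bl: "is_proj T \<Longrightarrow> bounded_linear T"
  unfolding is_proj_def bounded_clinear_def by simp

lemma proj_scaleC: "is_proj T \<Longrightarrow> T (scaleC a x) = scaleC a (T x)"
  unfolding is_proj_def bounded_clinear_def by simp

lemma proj_idem: "is_proj T \<Longrightarrow> T (T x) = T x"
  unfolding is_proj_def by (metis comp_apply)

locale pvmloc =
  fixes X :: "'p set" and A :: "'p set set" and P :: "'p set \<Rightarrow> 'h::chilbert_space \<Rightarrow> 'h"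
  assumes pvm: "pvm X A P" and sa: "sigma_algebra X A"
begin

sublocale sigma_algebra X A by (rule sa)

lemma proj: "B \<in> A \<Longrightarrow> is_proj (P B)"
  using pvm unfolding pvm_def by blast

lemma bl: "B \<in> A \<Longrightarrow> bounded_linear (P B)"
  using proj proj_bl by blast

lemma lin: "B \<in> A \<Longrightarrow> linear (P B)"
  using bl bounded_linear.linear by blast

lemma P_empty[simp]: "P {} h = 0"
  using pvm unfolding pvm_def zero_op_def by simp

lemma P_X[simp]: "P X h = h"
  using pvm unfolding pvm_def by simp

lemma P_mult: "B \<in> A \<Longrightarrow> C \<in> A \<Longrightarrow> P B (P C h) = P (B \<inter> C) h"
  using pvm unfolding pvm_def by (metis comp_apply)

lemma P_sums: "range F \<subseteq> A \<Longrightarrow> disjoint_family F \<Longrightarrow> (\<lambda>n. P (F n) h) sums P (\<Union>n. F n) h"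
  using pvm unfolding pvm_def by blast

lemma empty_in[simp]: "{} \<in> A" by (rule empty_sets)

lemma P_add:
  assumes "B \<in> A" "C \<in> A" "B \<inter> C = {}"
  shows "P (B \<union> C) h = P B h + P C h"
proof -
  define F where "F = (\<lambda>n::nat. if n = 0 then B else if n = 1 then C else {})"
  have r: "range F \<subseteq> A" using assms(1,2) unfolding F_def by auto
  have dj: "disjoint_family F" unfolding disjoint_family_on_def
  proof (intro ballI impI)
    fix m n :: nat assume "m \<noteq> n"
    thus "F m \<inter> F n = {}" using assms(3) unfolding F_def by (auto simp: Int_commute)
  qed
  have u: "(\<Union>n. F n) = B \<union> C"
  proof
    show "(\<Union>n. F n) \<subseteq> B \<union> C" unfolding F_def by auto
    have "F 0 = B" "F 1 = C" unfolding F_def by auto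
    thus "B \<union> C \<subseteq> (\<Union>n. F n)" by blast
  qed
  have s1: "(\<lambda>n. P (F n) h) sums P (B \<union> C) h" using P_sums[OF r dj] unfolding u .
  have z: "P (F n) h = 0" if "n \<notin> {0,1}" for n
  proof -
    have "F n = {}" using that unfolding F_def by auto
    thus ?thesis by simp
  qed
  have s2: "(\<lambda>n. P (F n) h) sums (\<Sum>n\<in>{0,1}. P (F n) h)"
    by (rule sums_finite) (simp_all add: z)
  have "P (B \<union> C) h = (\<Sum>n\<in>{0,1}. P (F n) h)" using sums_unique2[OF s1 s2] .
  also have "\<dots> = P B h + P C h" unfolding F_def by simp
  finally show ?thesis .
qed

lemma sub: "B \<in> A \<Longrightarrow> B \<subseteq> X"
  by (rule sets_into_space)

lemma diff_in: "B \<in> A \<Longrightarrow> C \<in> A \<Longrightarrow> B - C \<in> A"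
  by (rule Diff)

lemma X_in[simp]: "X \<in> A" by (rule top)

lemma P_compl:
  assumes "B \<in> A"
  shows "P (X - B) h = h - P B h"
proof -
  have e: "B \<union> (X - B) = X" using sub[OF assms] by auto
  have "P B h + P (X - B) h = h"
    using P_add[OF assms diff_in[OF X_in assms], of h] unfolding e P_X by (simp add: Int_Diff)
  thus ?thesis by (simp add: eq_diff_eq add.commute)
qed

lemma P_sa:
  assumes B: "B \<in> A"
  shows "cinner (P B x) y = cinner x (P B y)"
proof (cases "\<exists>S. \<forall>x y. cinner (P B x) y = cinner x (S y)")
  case True thus ?thesis using proj_sa[OF proj[OF B]] by blast
next
  case False
  hence PB: "P B = The (\<lambda>_. False)"
    using adj_none[OF False] proj[OF B] unfolding is_proj_def by simp
  have C: "X - B \<in> A" by (rule diff_in[OF X_in B])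
  show ?thesis
  proof (cases "\<exists>S. \<forall>x y. cinner (P (X - B) x) y = cinner x (S y)")
    case True
    have saC: "cinner (P (X - B) u) v = cinner u (P (X - B) v)" for u v
      using proj_sa[OF proj[OF C] True] .
    have e: "P B h = h - P (X - B) h" for h using P_compl[OF B, of h] by simp
    show ?thesis unfolding e using saC[of x y] by (simp add: cinner_diff_left cinner_diff_right)
  next
    case False2: False
    hence PC: "P (X - B) = The (\<lambda>_. False)"
      using adj_none[OF False2] proj[OF C] unfolding is_proj_def by simp
    have "P B h = 0" for h
    proof -
      have "P B h = P B (P B h)" using proj_idem[OF proj[OF B]] by simp
      also have "\<dots> = P B (P (X - B) h)" using PB PC by simp
      also have "\<dots> = P (B \<inter> (X - B)) h" using P_mult[OF B C] .
      also have "\<dots> = 0" by simp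
      finally show ?thesis .
    qed
    thus ?thesis by simp
  qed
qed

lemma P_pos: "B \<in> A \<Longrightarrow> Re (cinner (P B h) h) = (norm (P B h))^2"
proof -
  assume B: "B \<in> A"
  have "cinner (P B h) h = cinner (P B (P B h)) h" using proj_idem[OF proj[OF B]] by simp
  also have "\<dots> = cinner (P B h) (P B h)" using P_sa[OF B] by simp
  finally show ?thesis by (simp add: norm_sq_cinner)
qed

end


lemma cspan_sum:
  assumes "finite F" "\<forall>i\<in>F. g i \<in> S"
  shows "(\<Sum>i\<in>F. scaleC (a i) (g i :: 'h::complex_inner)) \<in> cspan S"
proof -
  have "(\<Sum>i\<in>F. scaleC (a i) (g i)) = (\<Sum>v\<in>g ` F. \<Sum>i\<in>{i\<in>F. g i = v}. scaleC (a i) (g i))"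
    by (rule sum.image_gen[OF assms(1)])
  also have "\<dots> = (\<Sum>v\<in>g ` F. scaleC (\<Sum>i\<in>{i\<in>F. g i = v}. a i) v)"
  proof (rule sum.cong[OF refl])
    fix v assume "v \<in> g ` F"
    have "(\<Sum>i\<in>{i\<in>F. g i = v}. scaleC (a i) (g i)) = (\<Sum>i\<in>{i\<in>F. g i = v}. scaleC (a i) v)"
      by (rule sum.cong) auto
    thus "(\<Sum>i\<in>{i\<in>F. g i = v}. scaleC (a i) (g i)) = scaleC (\<Sum>i\<in>{i\<in>F. g i = v}. a i) v"
      by (simp add: scaleC_sum_left)
  qed
  finally have e: "(\<Sum>i\<in>F. scaleC (a i) (g i)) = (\<Sum>v\<in>g ` F. scaleC (\<Sum>i\<in>{i\<in>F. g i = v}. a i) v)" .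
  have "finite (g ` F)" "g ` F \<subseteq> S" using assms by auto
  thus ?thesis unfolding cspan_def mem_Collect_eq e
    by (intro exI[of _ "g ` F"] exI[of _ "\<lambda>v. \<Sum>i\<in>{i\<in>F. g i = v}. a i"] conjI) (assumption | rule refl)+
qed

lemma lin_scaleC_sum:
  assumes "is_proj T"
  shows "T (\<Sum>v\<in>F. scaleC (c v) v) = (\<Sum>v\<in>F. scaleC (c v) (T (v::'h::complex_inner)))"
proof -
  have "linear T" using proj_bl[OF assms] bounded_linear.linear by blast
  hence "T (\<Sum>v\<in>F. scaleC (c v) v) = (\<Sum>v\<in>F. T (scaleC (c v) v))" by (rule real_vector.linear_sum)
  thus ?thesis using proj_scaleC[OF assms] by simp
qed

locale kp =
  fixes k :: nat and L :: "'a set" and r s :: "'a \<Rightarrow> 'a" and c :: "'a \<Rightarrow> 'a \<Rightarrow> 'a"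
    and d :: "'a \<Rightarrow> nat \<Rightarrow> nat"
    and P :: "((nat \<Rightarrow> nat) \<Rightarrow> (nat \<Rightarrow> nat) \<Rightarrow> 'a) set \<Rightarrow> 'h::chilbert_space \<Rightarrow> 'h"
  assumes kg: "kgraph k L r s c d" and pv: "pvm (kpaths k L r s c d) (kpath_borel k L r s c d) P"
begin

sublocale pvmloc "kpaths k L r s c d" "kpath_borel k L r s c d" P
  by (rule pvmloc.intro[OF pv borel_sa])

abbreviation "Z x n \<equiv> zcyl k L r s c d x n"
abbreviation "XX \<equiv> kpaths k L r s c d"
abbreviation "AA \<equiv> kpath_borel k L r s c d"

lemma P_lim:
  assumes x: "x \<in> XX"
  shows "(\<lambda>n. P (Z x n) h) \<longlonglongrightarrow> P {x} h"
proof -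
  define D where "D j = Z x j - Z x (Suc j)" for j
  have Zin: "Z x n \<in> AA" for n using zcyl_borel[OF x] .
  have sx: "{x} \<in> AA" using singleton_borel[OF kg x] .
  have Din: "D j \<in> AA" for j unfolding D_def by (intro diff_in Zin)
  have anti: "m \<le> n \<Longrightarrow> Z x n \<subseteq> Z x m" for m n using zcyl_antimono[OF kg x] by blast
  have xZ: "x \<in> Z x n" for n using zcyl_mem[OF x] .
  define G where "G n j = (if n \<le> j then D j else {})" for n j
  have Gr: "range (G n) \<subseteq> AA" for n unfolding G_def using Din by auto
  have Gd: "disjoint_family (G n)" for n
    unfolding disjoint_family_on_def
  proof (intro ballI impI)
    fix i j :: nat assume "i \<noteq> j"
    have "D i \<inter> D j = {}" if "i < j" for i j
    proof -
      have "D j \<subseteq> Z x (Suc i)" unfolding D_def using anti[of "Suc i" j] that by auto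
      thus ?thesis unfolding D_def by auto
    qed
    hence "D i \<inter> D j = {}" using \<open>i \<noteq> j\<close>
      by (cases "i < j") (auto simp: Int_commute dest: linorder_neqE_nat)
    thus "G n i \<inter> G n j = {}" unfolding G_def by auto
  qed
  have Gu: "(\<Union>j. G n j) = Z x n - {x}" for n
  proof
    show "(\<Union>j. G n j) \<subseteq> Z x n - {x}"
    proof
      fix y assume "y \<in> (\<Union>j. G n j)"
      then obtain j where j: "n \<le> j" "y \<in> D j" unfolding G_def by (auto split: if_splits)
      hence "y \<in> Z x n" unfolding D_def using anti[OF j(1)] by auto
      moreover have "y \<noteq> x" using j(2) xZ[of "Suc j"] unfolding D_def by auto
      ultimately show "y \<in> Z x n - {x}" by simp
    qed
    show "Z x n - {x} \<subseteq> (\<Union>j. G n j)"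
    proof
      fix y assume y: "y \<in> Z x n - {x}"
      hence "y \<notin> (\<Inter>m. Z x m)" using zcyl_Inter[OF kg x] by auto
      then obtain m where m: "y \<notin> Z x m" by auto
      define m0 where "m0 = (LEAST m. y \<notin> Z x m)"
      have m0: "y \<notin> Z x m0" unfolding m0_def by (rule LeastI[of "\<lambda>m. y \<notin> Z x m" m, OF m])
      have less: "y \<in> Z x i" if "i < m0" for i
        using not_less_Least[of i "\<lambda>m. y \<notin> Z x m"] that unfolding m0_def by auto
      have "n < m0"
      proof (rule ccontr)
        assume "\<not> n < m0"
        hence "Z x n \<subseteq> Z x m0" using anti by simp
        thus False using y m0 by auto
      qed
      define j where "j = m0 - 1"
      have j: "m0 = Suc j" "n \<le> j" using \<open>n < m0\<close> unfolding j_def by auto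
      have "y \<in> D j" unfolding D_def using less[of j] m0 j by auto
      thus "y \<in> (\<Union>j. G n j)" unfolding G_def using j(2) by auto
    qed
  qed
  define f where "f j = P (D j) h" for j
  have PG: "P (G n j) h = (if n \<le> j then f j else 0)" for n j
    unfolding G_def f_def by simp
  have sG: "(\<lambda>j. if n \<le> j then f j else 0) sums P (Z x n - {x}) h" for n
  proof -
    have "(\<lambda>j. P (G n j) h) sums P (\<Union>j. G n j) h" by (rule P_sums[OF Gr[of n] Gd[of n]])
    thus ?thesis unfolding Gu[of n] PG[of n] .
  qed
  define s0 where "s0 = P (Z x 0 - {x}) h"
  have sf: "f sums s0" using sG[of 0] unfolding s0_def by simp
  have eq: "P (Z x n - {x}) h = s0 - (\<Sum>j<n. f j)" for n
  proof -
    have s1: "(\<lambda>j. if j < n then f j else 0) sums (\<Sum>j\<in>{..<n}. if j < n then f j else 0)"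
      by (rule sums_finite) auto
    have s1': "(\<lambda>j. if j < n then f j else 0) sums (\<Sum>j<n. f j)"
      using s1 by simp
    have "(\<lambda>j. f j - (if j < n then f j else 0)) sums (s0 - (\<Sum>j<n. f j))"
      by (rule sums_diff[OF sf s1'])
    moreover have "(\<lambda>j. f j - (if j < n then f j else 0)) = (\<lambda>j. if n \<le> j then f j else 0)"
      by (rule ext) auto
    ultimately have "(\<lambda>j. if n \<le> j then f j else 0) sums (s0 - (\<Sum>j<n. f j))" by simp
    thus ?thesis using sums_unique2[OF sG[of n]] by simp
  qed
  have add: "P (Z x n) h = (s0 - (\<Sum>j<n. f j)) + P {x} h" for n
  proof -
    have e: "(Z x n - {x}) \<union> {x} = Z x n" using xZ[of n] by auto
    have "P ((Z x n - {x}) \<union> {x}) h = P (Z x n - {x}) h + P {x} h"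
      using P_add[OF diff_in[OF Zin[of n] sx] sx, of h] by simp
    hence "P (Z x n) h = P (Z x n - {x}) h + P {x} h" unfolding e .
    thus ?thesis unfolding eq .
  qed
  have "(\<lambda>n. \<Sum>j<n. f j) \<longlonglongrightarrow> s0" using sf unfolding sums_def .
  hence "(\<lambda>n. (s0 - (\<Sum>j<n. f j)) + P {x} h) \<longlonglongrightarrow> (s0 - s0) + P {x} h"
    by (intro tendsto_intros)
  hence "(\<lambda>n. (s0 - (\<Sum>j<n. f j)) + P {x} h) \<longlonglongrightarrow> P {x} h" by simp
  thus ?thesis by (simp only: add)
qed

lemma Px_cyl:
  assumes x: "x \<in> XX" and l: "l \<in> L"
  shows "P {x} (P (cylinder k L r s c d l) h) = (if x \<in> cylinder k L r s c d l then P {x} h else 0)"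
proof -
  have "P {x} (P (cylinder k L r s c d l) h) = P ({x} \<inter> cylinder k L r s c d l) h"
    by (rule P_mult[OF singleton_borel[OF kg x] cyl_borel[OF l]])
  thus ?thesis by auto
qed

end


lemma has_sum_countable_support:
  fixes f :: "'b \<Rightarrow> 'h::real_normed_vector"
  assumes hs: "(f has_sum a) S"
  shows "countable {x\<in>S. f x \<noteq> 0}"
proof -
  have fin: "finite {x\<in>S. norm (f x) \<ge> e}" if e: "e > 0" for e
  proof -
    have "((\<lambda>F. sum f F) \<longlongrightarrow> a) (finite_subsets_at_top S)" using hs unfolding has_sum_def .
    hence "eventually (\<lambda>F. dist (sum f F) a < e/2) (finite_subsets_at_top S)"
      by (rule tendstoD) (use e in simp)
    then obtain X0 where X0: "finite X0" "X0 \<subseteq> S"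
      "\<forall>Y. finite Y \<and> X0 \<subseteq> Y \<and> Y \<subseteq> S \<longrightarrow> dist (sum f Y) a < e/2"
      unfolding eventually_finite_subsets_at_top by (elim exE conjE) (rule that)
    have "{x\<in>S. norm (f x) \<ge> e} \<subseteq> X0"
    proof
      fix x assume x: "x \<in> {x\<in>S. norm (f x) \<ge> e}"
      show "x \<in> X0"
      proof (rule ccontr)
        assume nx: "x \<notin> X0"
        have "finite (insert x X0) \<and> X0 \<subseteq> insert x X0 \<and> insert x X0 \<subseteq> S" using X0(1,2) x by auto
        hence d1: "dist (sum f (insert x X0)) a < e/2" using X0(3) by blast
        have "finite X0 \<and> X0 \<subseteq> X0 \<and> X0 \<subseteq> S" using X0(1,2) by auto
        hence d2: "dist (sum f X0) a < e/2" using X0(3) by blast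
        have "sum f (insert x X0) = f x + sum f X0" using X0(1) nx by simp
        hence "norm (f x) = dist (sum f (insert x X0)) (sum f X0)" by (simp add: dist_norm)
        also have "\<dots> \<le> dist (sum f (insert x X0)) a + dist (sum f X0) a" using dist_triangle[of "sum f (insert x X0)" "sum f X0" a] by (simp add: dist_commute)
        also have "\<dots> < e" using d1 d2 by simp
        finally show False using x by simp
      qed
    qed
    thus ?thesis by (rule finite_subset[OF _ X0(1)])
  qed
  have "{x\<in>S. f x \<noteq> 0} \<subseteq> (\<Union>m. {x\<in>S. norm (f x) \<ge> 1 / real (Suc m)})"
  proof
    fix x assume x: "x \<in> {x\<in>S. f x \<noteq> 0}"
    hence "norm (f x) > 0" by simp
    from reals_Archimedean[OF this] obtain m where "inverse (real (Suc m)) < norm (f x)" ..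
    hence "x \<in> {x\<in>S. norm (f x) \<ge> 1 / real (Suc m)}" using x by (simp add: inverse_eq_divide)
    thus "x \<in> (\<Union>m. {x\<in>S. norm (f x) \<ge> 1 / real (Suc m)})" by (rule UN_I[OF UNIV_I])
  qed
  have cm: "countable {x\<in>S. norm (f x) \<ge> 1 / real (Suc m)}" for m
    by (rule countable_finite[OF fin]) simp
  have "{x\<in>S. f x \<noteq> 0} \<subseteq> (\<Union>m. {x\<in>S. norm (f x) \<ge> 1 / real (Suc m)})" by fact
  moreover have "countable (\<Union>m. {x\<in>S. norm (f x) \<ge> 1 / real (Suc m)})"
    by (rule countable_UN) (simp, rule cm)
  ultimately show ?thesis by (rule countable_subset)
qed

lemma cinner_sum_left: "cinner (\<Sum>i\<in>F. f i) (y::'h::complex_inner) = (\<Sum>i\<in>F. cinner (f i) y)"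
  by (induction F rule: infinite_finite_induct) (auto simp: cinner_add_left)

context kp
begin

abbreviation "Sc \<xi> \<equiv> {P (cylinder k L r s c d l) \<xi> | l. l \<in> L}"

lemma oned_aux:
  assumes cyc: "closure (cspan (Sc \<xi>)) = UNIV" and x: "x \<in> XX"
  shows "\<exists>a. P {x} h = scaleC a (P {x} \<xi>)"
proof -
  define T where "T = P {x}"
  define w where "w = T \<xi>"
  define V where "V = {scaleC a w | a. True}"
  have sx: "{x} \<in> AA" using singleton_borel[OF kg x] .
  have pT: "is_proj T" unfolding T_def by (rule proj[OF sx])
  have inS: "T v \<in> V" if vS: "v \<in> Sc \<xi>" for v
  proof -
    obtain l where l: "l \<in> L" "v = P (cylinder k L r s c d l) \<xi>" using vS by blast
    have "T v = (if x \<in> cylinder k L r s c d l then w else 0)"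
      unfolding T_def w_def l(2) by (rule Px_cyl[OF x l(1)])
    moreover have "w \<in> V" unfolding V_def mem_Collect_eq by (rule exI[of _ 1]) (simp add: scaleC_one)
    moreover have "0 \<in> V" unfolding V_def mem_Collect_eq by (rule exI[of _ 0]) simp
    ultimately show ?thesis by simp
  qed
  have inspan: "T y \<in> V" if yS: "y \<in> cspan (Sc \<xi>)" for y
  proof -
    obtain F cc where F: "finite F" "F \<subseteq> Sc \<xi>" "y = (\<Sum>v\<in>F. scaleC (cc v) v)"
      using yS unfolding cspan_def mem_Collect_eq by (elim exE conjE) (rule that)
    have "\<forall>v\<in>F. \<exists>b. T v = scaleC b w"
    proof
      fix v assume "v \<in> F"
      hence "T v \<in> V" using inS F(2) by (simp add: subset_iff)
      thus "\<exists>b. T v = scaleC b w" unfolding V_def by simp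
    qed
    then obtain b where b: "\<forall>v\<in>F. T v = scaleC (b v) w" by (elim bchoice[THEN exE]) (rule that)
    have "T y = (\<Sum>v\<in>F. scaleC (cc v) (T v))" unfolding F(3) by (rule lin_scaleC_sum[OF pT])
    also have "\<dots> = (\<Sum>v\<in>F. scaleC (cc v * b v) w)"
      by (rule sum.cong[OF refl]) (simp add: b scaleC_scaleC)
    also have "\<dots> = scaleC (\<Sum>v\<in>F. cc v * b v) w" by (simp add: scaleC_sum_left)
    finally show ?thesis unfolding V_def mem_Collect_eq by (intro exI conjI TrueI)
  qed
  have "h \<in> closure (cspan (Sc \<xi>))" using cyc by simp
  then obtain ys where ys: "\<forall>n. ys n \<in> cspan (Sc \<xi>)" "ys \<longlonglongrightarrow> h"
    unfolding closure_sequential by blast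
  have "(\<lambda>n. T (ys n)) \<longlonglongrightarrow> T h"
    by (rule bounded_linear.tendsto[OF proj_bl[OF pT] ys(2)])
  moreover have "\<And>n. T (ys n) \<in> V" using inspan ys(1) by blast
  ultimately have "T h \<in> V" unfolding V_def by (rule closed_sequentially[OF closed_line[of w], rotated])
  thus ?thesis unfolding V_def T_def w_def by simp
qed

lemma oned_nz:
  assumes cyc: "closure (cspan (Sc \<xi>)) = UNIV" and x: "x \<in> XX" and nz: "P {x} \<noteq> zero_op"
  shows "P {x} \<xi> \<noteq> 0"
proof
  assume z: "P {x} \<xi> = 0"
  have "P {x} h = 0" for h
  proof -
    obtain a where "P {x} h = scaleC a (P {x} \<xi>)" using oned_aux[OF cyc x, of h] ..
    thus ?thesis using z by simp
  qed
  hence "P {x} = zero_op" unfolding zero_op_def by (rule ext)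
  thus False using nz by simp
qed

lemma oned:
  assumes cyc: "closure (cspan (Sc \<xi>)) = UNIV" and x: "x \<in> XX" and nz: "P {x} \<noteq> zero_op"
  shows "one_dimensional (range (P {x}))"
  unfolding one_dimensional_def
proof (intro exI conjI)
  show "P {x} \<xi> \<noteq> 0" by (rule oned_nz[OF assms])
  have pT: "is_proj (P {x})" by (rule proj[OF singleton_borel[OF kg x]])
  show "range (P {x}) = {scaleC a (P {x} \<xi>) | a. True}"
  proof
    show "range (P {x}) \<subseteq> {scaleC a (P {x} \<xi>) | a. True}" using oned_aux[OF cyc x] by blast
    show "{scaleC a (P {x} \<xi>) | a. True} \<subseteq> range (P {x})"
    proof
      fix y assume "y \<in> {scaleC a (P {x} \<xi>) | a. True}"
      then obtain a where "y = scaleC a (P {x} \<xi>)" by blast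
      hence "y = P {x} (scaleC a \<xi>)" using proj_scaleC[OF pT] by simp
      thus "y \<in> range (P {x})" by blast
    qed
  qed
qed

definition mu where "mu \<xi> B = ennreal (Re (cinner (P B \<xi>) \<xi>))"

lemma mu_ca: "countably_additive AA (mu \<xi>)"
  unfolding countably_additive_def
proof (intro allI impI)
  fix F :: "nat \<Rightarrow> _" assume F: "range F \<subseteq> AA" "disjoint_family F" "(\<Union>i. F i) \<in> AA"
  have s: "(\<lambda>n. P (F n) \<xi>) sums P (\<Union>n. F n) \<xi>" by (rule P_sums[OF F(1,2)])
  have "(\<lambda>n. \<Sum>i<n. P (F i) \<xi>) \<longlonglongrightarrow> P (\<Union>n. F n) \<xi>" using s unfolding sums_def .
  hence "(\<lambda>n. Re (cinner (\<Sum>i<n. P (F i) \<xi>) \<xi>)) \<longlonglongrightarrow> Re (cinner (P (\<Union>n. F n) \<xi>) \<xi>)"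
    by (rule tendsto_Re_cinner)
  hence rs: "(\<lambda>n. Re (cinner (P (F n) \<xi>) \<xi>)) sums Re (cinner (P (\<Union>n. F n) \<xi>) \<xi>)"
    unfolding sums_def cinner_sum_left Re_sum .
  have nn: "0 \<le> Re (cinner (P (F n) \<xi>) \<xi>)" for n
  proof -
    have "F n \<in> AA" using F(1) by auto
    thus ?thesis using P_pos[of "F n" \<xi>] by simp
  qed
  have "(\<Sum>i. mu \<xi> (F i)) = ennreal (\<Sum>i. Re (cinner (P (F i) \<xi>) \<xi>))"
    unfolding mu_def by (rule suminf_ennreal2[OF nn sums_summable[OF rs]])
  also have "\<dots> = mu \<xi> (\<Union>i. F i)" unfolding mu_def using sums_unique[OF rs] by simp
  finally show "(\<Sum>i. mu \<xi> (F i)) = mu \<xi> (\<Union>i. F i)" .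
qed

lemma mu_pos: "positive AA (mu \<xi>)"
  unfolding positive_def mu_def by simp

lemma atomic:
  assumes cyc: "closure (cspan (Sc \<xi>)) = UNIV" and pa: "purely_atomic XX AA P"
  shows "atomic_measure (vector_measure XX AA P \<xi>)"
proof -
  obtain Om where Om: "Om \<in> AA" "P (XX - Om) = zero_op" "\<forall>x\<in>Om. P {x} \<noteq> zero_op"
    using pa unfolding purely_atomic_def by blast
  have vm: "vector_measure XX AA P \<xi> = measure_of XX AA (mu \<xi>)"
    unfolding vector_measure_def mu_def ..
  have em: "emeasure (vector_measure XX AA P \<xi>) B = mu \<xi> B" if "B \<in> AA" for B
    unfolding vm by (rule emeasure_measure_of_sigma[OF borel_sa mu_pos mu_ca that])
  have sub: "AA \<subseteq> Pow XX" using sets_into_space by blast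
  have sets: "sets (vector_measure XX AA P \<xi>) = AA"
    unfolding vm sets_measure_of[OF sub] by (rule sigma_sets_eq)
  have space: "space (vector_measure XX AA P \<xi>) = XX"
    unfolding vm space_measure_of[OF sub] ..
  show ?thesis unfolding atomic_measure_def sets space
  proof (intro bexI conjI ballI)
    show "Om \<in> AA" by (rule Om(1))
    show "emeasure (vector_measure XX AA P \<xi>) (XX - Om) = 0"
      unfolding em[OF diff_in[OF X_in Om(1)]] mu_def Om(2) zero_op_def by simp
    fix x assume x: "x \<in> Om"
    have xX: "x \<in> XX" using x sets_into_space[OF Om(1)] by blast
    show sx: "{x} \<in> AA" by (rule singleton_borel[OF kg xX])
    have "P {x} \<xi> \<noteq> 0" using oned_nz[OF cyc xX] Om(3) x by blast
    hence "(norm (P {x} \<xi>))^2 > 0" by simp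
    thus "emeasure (vector_measure XX AA P \<xi>) {x} \<noteq> 0"
      unfolding em[OF sx] mu_def P_pos[OF sx] by simp
  qed
qed

end


context kp
begin

lemma zero_on_dense:
  assumes B: "B \<in> AA" and D: "closure D = UNIV" and z: "\<forall>d\<in>D. P B d = 0"
  shows "P B h = 0"
proof -
  have "h \<in> closure D" using D by simp
  then obtain ds where ds: "\<forall>n. ds n \<in> D" "ds \<longlonglongrightarrow> h" unfolding closure_sequential by blast
  have "(\<lambda>n. P B (ds n)) \<longlonglongrightarrow> P B h" by (rule bounded_linear.tendsto[OF bl[OF B] ds(2)])
  moreover have "(\<lambda>n. P B (ds n)) = (\<lambda>n. 0)" using ds(1) z by simp
  ultimately have "(\<lambda>n. 0) \<longlonglongrightarrow> P B h" by simp
  thus ?thesis using LIMSEQ_unique[OF tendsto_const] by metis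
qed

lemma cyclic_exists:
  assumes pa: "purely_atomic XX AA P" and sep: "separable_hspace TYPE('h)"
    and od: "\<forall>x\<in>XX. P {x} \<noteq> zero_op \<longrightarrow> one_dimensional (range (P {x}))"
  shows "\<exists>\<xi>. closure (cspan (Sc \<xi>)) = UNIV"
proof -
  obtain Om where Om: "Om \<in> AA" "P (XX - Om) = zero_op" "\<forall>x\<in>Om. P {x} \<noteq> zero_op"
    "\<forall>h. ((\<lambda>x. P {x} h) has_sum h) Om"
    using pa unfolding purely_atomic_def by blast
  have OmX: "Om \<subseteq> XX" by (rule sets_into_space[OF Om(1)])
  have sx: "{x} \<in> AA" if "x \<in> Om" for x using singleton_borel[OF kg] that OmX by blast
  show ?thesis
  proof (cases "Om = {}")
    case True
    have h0: "h = 0" for h :: 'h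
    proof -
      have "((\<lambda>x. P {x} h) has_sum h) {}" using Om(4) True by simp
      from has_sum_unique[OF this has_sum_empty] show ?thesis .
    qed
    have "(0::'h) \<in> cspan (Sc 0)" unfolding cspan_def mem_Collect_eq
      by (rule exI[of _ "{}"]) simp
    hence c0: "(0::'h) \<in> closure (cspan (Sc (0::'h)))" using closure_subset by blast
    have "UNIV \<subseteq> closure (cspan (Sc (0::'h)))"
    proof
      fix h :: 'h show "h \<in> closure (cspan (Sc (0::'h)))" using c0 h0[of h] by simp
    qed
    hence "closure (cspan (Sc (0::'h))) = UNIV" by (rule subset_antisym[OF subset_UNIV])
    thus ?thesis ..
  next
    case Omne: False
    obtain Dd :: "'h set" where Dd: "countable Dd" "closure Dd = UNIV"
      using sep unfolding separable_hspace_def by blast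
    have "Om \<subseteq> (\<Union>d\<in>Dd. {x\<in>Om. P {x} d \<noteq> 0})"
    proof
      fix x assume x: "x \<in> Om"
      show "x \<in> (\<Union>d\<in>Dd. {x\<in>Om. P {x} d \<noteq> 0})"
      proof (rule ccontr)
        assume "x \<notin> (\<Union>d\<in>Dd. {x\<in>Om. P {x} d \<noteq> 0})"
        hence "\<forall>d\<in>Dd. P {x} d = 0" using x by blast
        hence "P {x} h = 0" for h by (rule zero_on_dense[OF sx[OF x] Dd(2)])
        hence "P {x} = zero_op" unfolding zero_op_def by (rule ext)
        thus False using Om(3) x by blast
      qed
    qed
    moreover have "countable (\<Union>d\<in>Dd. {x\<in>Om. P {x} d \<noteq> 0})"
      by (rule Countable_Set.countable_UN[OF Dd(1)]) (rule has_sum_countable_support[OF Om(4)[rule_format]])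
    ultimately have cOm: "countable Om" by (rule countable_subset)
    define e where "e = from_nat_into Om"
    have re: "range e = Om" unfolding e_def using range_from_nat_into[OF Omne cOm] .
    have eOm: "e n \<in> Om" for n using re by blast
    define vv where "vv x = (SOME v. v \<noteq> 0 \<and> range (P {x}) = {scaleC a v | a. True})" for x
    have vvp: "vv x \<noteq> 0 \<and> range (P {x}) = {scaleC a (vv x) | a. True}" if x: "x \<in> Om" for x
    proof -
      have "one_dimensional (range (P {x}))" using od Om(3) x OmX by blast
      hence "\<exists>v. v \<noteq> 0 \<and> range (P {x}) = {scaleC a v | a. True}" unfolding one_dimensional_def .
      thus ?thesis unfolding vv_def by (rule someI_ex)
    qed
    have vfix: "P {x} (vv x) = vv x" if x: "x \<in> Om" for x
    proof -
      have "vv x \<in> {scaleC a (vv x) | a. True}" unfolding mem_Collect_eq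
        by (rule exI[of _ 1]) (simp add: scaleC_one)
      hence "vv x \<in> range (P {x})" using vvp[OF x] by simp
      then obtain u where "vv x = P {x} u" by blast
      thus ?thesis using proj_idem[OF proj[OF sx[OF x]]] by simp
    qed
    have vorth: "P {y} (vv x) = 0" if x: "x \<in> Om" and y: "y \<in> Om" and ne: "y \<noteq> x" for x y
    proof -
      have "vv x \<in> {scaleC a (vv x) | a. True}" unfolding mem_Collect_eq
        by (rule exI[of _ 1]) (simp add: scaleC_one)
      hence "vv x \<in> range (P {x})" using vvp[OF x] by simp
      then obtain u where u: "vv x = P {x} u" by blast
      have "P {y} (P {x} u) = P ({y} \<inter> {x}) u" by (rule P_mult[OF sx[OF y] sx[OF x]])
      also have "{y} \<inter> {x} = {}" using ne by simp
      finally show ?thesis using u by simp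
    qed
    define uu where "uu n = vv (e n)" for n
    have unz: "uu n \<noteq> 0" for n unfolding uu_def using vvp[OF eOm] by blast
    define a where "a n = (1/2)^n / norm (uu n)" for n :: nat
    define \<xi> where "\<xi> = (\<Sum>n. a n *\<^sub>R uu n)"
    have nrm: "norm (a n *\<^sub>R uu n) = (1/2)^n" for n
      using unz[of n] unfolding a_def by simp
    have summ: "summable (\<lambda>n. a n *\<^sub>R uu n)"
      by (rule summable_norm_cancel) (simp only: nrm, rule summable_geometric, simp)
    have Pxi: "\<exists>cc. cc \<noteq> 0 \<and> P {x} \<xi> = cc *\<^sub>R vv x" if x: "x \<in> Om" for x
    proof -
      define g where "g n = (if e n = x then a n else 0)" for n
      have sg: "summable g"
      proof (rule summable_comparison_test'[where N=0])
        show "summable (\<lambda>n. (1/2)^n / norm (vv x))"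
          by (rule summable_divide) (rule summable_geometric, simp)
        fix n :: nat
        show "norm (g n) \<le> (1/2)^n / norm (vv x)"
          unfolding g_def a_def uu_def by simp
      qed
      have "P {x} \<xi> = (\<Sum>n. P {x} (a n *\<^sub>R uu n))"
        unfolding \<xi>_def by (rule bounded_linear.suminf[OF bl[OF sx[OF x]] summ])
      also have "(\<lambda>n. P {x} (a n *\<^sub>R uu n)) = (\<lambda>n. g n *\<^sub>R vv x)"
      proof
        fix n
        have "P {x} (a n *\<^sub>R uu n) = a n *\<^sub>R P {x} (uu n)"
          using proj_scaleC[OF proj[OF sx[OF x]]] by (simp add: scaleR_scaleC)
        also have "\<dots> = g n *\<^sub>R vv x"
        proof (cases "e n = x")
          case True thus ?thesis unfolding g_def uu_def using vfix[OF x] by simp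
        next
          case False thus ?thesis unfolding g_def uu_def using vorth[OF eOm x] by simp
        qed
        finally show "P {x} (a n *\<^sub>R uu n) = g n *\<^sub>R vv x" .
      qed
      also have "(\<Sum>n. g n *\<^sub>R vv x) = (\<Sum>n. g n) *\<^sub>R vv x" by (rule suminf_scaleR_left[OF sg, symmetric])
      finally have e1: "P {x} \<xi> = (\<Sum>n. g n) *\<^sub>R vv x" .
      obtain i where i: "e i = x" using x re by blast
      have "0 < (\<Sum>n. g n)"
      proof (rule suminf_pos2[OF sg])
        show "0 \<le> g n" for n unfolding g_def a_def by simp
        show "0 < g i" unfolding g_def a_def using i unz[of i] by simp
      qed
      thus ?thesis using e1 by (intro exI[of _ "\<Sum>n. g n"]) simp
    qed
    have coef: "\<exists>\<alpha>. P {x} h = scaleC \<alpha> (P {x} \<xi>)" if x: "x \<in> Om" for x h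
    proof -
      obtain cc where cc: "cc \<noteq> 0" "P {x} \<xi> = cc *\<^sub>R vv x" using Pxi[OF x] by blast
      have "P {x} h \<in> range (P {x})" by simp
      hence "P {x} h \<in> {scaleC a (vv x) | a. True}" using vvp[OF x] by simp
      then obtain b where b: "P {x} h = scaleC b (vv x)" by blast
      have "scaleC (b / complex_of_real cc) (P {x} \<xi>) = scaleC b (vv x)"
        unfolding cc(2) scaleR_scaleC scaleC_scaleC using cc(1) by simp
      thus ?thesis using b by (intro exI[of _ "b / complex_of_real cc"]) simp
    qed
    define K where "K = closure (cspan (Sc \<xi>))"
    have finK: "(\<Sum>x\<in>F. scaleC (\<alpha> x) (P {x} \<xi>)) \<in> K" if F: "finite F" "F \<subseteq> Om" for F \<alpha>
    proof -
      define sq where "sq n = (\<Sum>x\<in>F. scaleC (\<alpha> x) (P (Z x n) \<xi>))" for n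
      have "sq n \<in> cspan (Sc \<xi>)" for n
        unfolding sq_def
      proof (rule cspan_sum[OF F(1)])
        show "\<forall>x\<in>F. P (Z x n) \<xi> \<in> Sc \<xi>"
        proof
          fix x assume "x \<in> F"
          hence xX: "x \<in> XX" using F(2) OmX by blast
          show "P (Z x n) \<xi> \<in> Sc \<xi>" unfolding zcyl_def mem_Collect_eq
            by (intro exI[of _ "x (\<lambda>_. 0) (Nv k n)"] conjI refl zcyl_L[OF xX])
        qed
      qed
      moreover have "sq \<longlonglongrightarrow> (\<Sum>x\<in>F. scaleC (\<alpha> x) (P {x} \<xi>))"
        unfolding sq_def
      proof (rule tendsto_sum)
        fix x assume "x \<in> F"
        hence xX: "x \<in> XX" using F(2) OmX by blast
        show "(\<lambda>n. scaleC (\<alpha> x) (P (Z x n) \<xi>)) \<longlonglongrightarrow> scaleC (\<alpha> x) (P {x} \<xi>)"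
          by (rule bounded_linear.tendsto[OF bounded_linear_scaleC_right P_lim[OF xX]])
      qed
      ultimately show ?thesis unfolding K_def closure_sequential by blast
    qed
    have "h \<in> K" for h
    proof (rule Lim_in_closed_set)
      show "closed K" unfolding K_def by simp
      show "finite_subsets_at_top Om \<noteq> bot" by simp
      show "(sum (\<lambda>x. P {x} h) \<longlongrightarrow> h) (finite_subsets_at_top Om)"
        using Om(4) unfolding has_sum_def by blast
      show "\<forall>\<^sub>F F in finite_subsets_at_top Om. sum (\<lambda>x. P {x} h) F \<in> K"
      proof (rule eventually_finite_subsets_at_top_weakI)
        fix F assume F: "finite F" "F \<subseteq> Om"
        define \<alpha> where "\<alpha> x = (SOME \<alpha>. P {x} h = scaleC \<alpha> (P {x} \<xi>))" for x
        have "sum (\<lambda>x. P {x} h) F = (\<Sum>x\<in>F. scaleC (\<alpha> x) (P {x} \<xi>))"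
        proof (rule sum.cong[OF refl])
          fix x assume "x \<in> F"
          hence "x \<in> Om" using F(2) by blast
          from coef[OF this, of h] show "P {x} h = scaleC (\<alpha> x) (P {x} \<xi>)"
            unfolding \<alpha>_def by (rule someI_ex)
        qed
        thus "sum (\<lambda>x. P {x} h) F \<in> K" using finK[OF F] by simp
      qed
    qed
    hence "UNIV \<subseteq> closure (cspan (Sc \<xi>))" unfolding K_def by (rule subsetI)
    hence "closure (cspan (Sc \<xi>)) = UNIV" by (rule subset_antisym[OF subset_UNIV])
    thus ?thesis ..
  qed
qed

end


theorem theorem3p12:
  fixes k :: nat and L :: "'a set" and r s :: "'a \<Rightarrow> 'a" and c :: "'a \<Rightarrow> 'a \<Rightarrow> 'a"
    and d :: "'a \<Rightarrow> nat \<Rightarrow> nat"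
    and t :: "'a \<Rightarrow> 'h::chilbert_space \<Rightarrow> 'h"
    and P :: "((nat \<Rightarrow> nat) \<Rightarrow> (nat \<Rightarrow> nat) \<Rightarrow> 'a) set \<Rightarrow> 'h \<Rightarrow> 'h"
  assumes "kgraph k L r s c d"
    and "kgraph_finite k L d"
    and "no_sources k L r d"
    and "separable_hspace TYPE('h)"
    and "ck_rep k L r s c d t"
    and "pvm (kpaths k L r s c d) (kpath_borel k L r s c d) P"
    and "\<forall>l\<in>L. P (cylinder k L r s c d l) = t l \<circ> adj (t l)"
    and "purely_atomic (kpaths k L r s c d) (kpath_borel k L r s c d) P"
    and "\<forall>l\<in>L. t l \<circ> adj (t l) \<noteq> zero_op"
  shows "(monic_rep L t \<longleftrightarrow>
           (\<forall>x\<in>kpaths k L r s c d. P {x} \<noteq> zero_op \<longrightarrow> one_dimensional (range (P {x}))))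
         \<and> (monic_rep L t \<longrightarrow>
              (\<forall>\<xi>. cyclic_vector L t \<xi> \<longrightarrow>
                 atomic_measure (vector_measure (kpaths k L r s c d) (kpath_borel k L r s c d) P \<xi>)))"
proof -
  interpret kp k L r s c d P by (rule kp.intro[OF assms(1) assms(6)])
  have tl: "t l (adj (t l) \<xi>) = P (cylinder k L r s c d l) \<xi>" if "l \<in> L" for l \<xi>
  proof -
    have "P (cylinder k L r s c d l) = t l \<circ> adj (t l)" using assms(7) that by blast
    thus ?thesis by simp
  qed
  have Sc_eq: "{t l (adj (t l) \<xi>) | l. l \<in> L} = Sc \<xi>" for \<xi>
  proof (rule Collect_cong)
    fix v show "(\<exists>l. v = t l (adj (t l) \<xi>) \<and> l \<in> L) = (\<exists>l. v = P (cylinder k L r s c d l) \<xi> \<and> l \<in> L)"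
      using tl by metis
  qed
  have cyc: "cyclic_vector L t \<xi> \<longleftrightarrow> closure (cspan (Sc \<xi>)) = UNIV" for \<xi>
    unfolding cyclic_vector_def Sc_eq ..
  have tnz: "\<forall>l\<in>L. t l \<noteq> zero_op"
  proof
    fix l assume l: "l \<in> L"
    show "t l \<noteq> zero_op"
    proof
      assume "t l = zero_op"
      hence "t l \<circ> adj (t l) = zero_op" unfolding zero_op_def by (simp add: comp_def)
      thus False using assms(9) l by blast
    qed
  qed
  have part1: "monic_rep L t \<longleftrightarrow>
           (\<forall>x\<in>kpaths k L r s c d. P {x} \<noteq> zero_op \<longrightarrow> one_dimensional (range (P {x})))"
  proof
    assume "monic_rep L t"
    then obtain \<xi> where "cyclic_vector L t \<xi>" unfolding monic_rep_def by blast
    hence cy: "closure (cspan (Sc \<xi>)) = UNIV" using cyc by blast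
    show "\<forall>x\<in>kpaths k L r s c d. P {x} \<noteq> zero_op \<longrightarrow> one_dimensional (range (P {x}))"
    proof (intro ballI impI)
      fix x assume "x \<in> kpaths k L r s c d" "P {x} \<noteq> zero_op"
      thus "one_dimensional (range (P {x}))" by (rule oned[OF cy])
    qed
  next
    assume od: "\<forall>x\<in>kpaths k L r s c d. P {x} \<noteq> zero_op \<longrightarrow> one_dimensional (range (P {x}))"
    obtain \<xi> where "closure (cspan (Sc \<xi>)) = UNIV" using cyclic_exists[OF assms(8) assms(4) od] by blast
    hence "cyclic_vector L t \<xi>" using cyc by blast
    thus "monic_rep L t" unfolding monic_rep_def using tnz by blast
  qed
  have part2: "monic_rep L t \<longrightarrow>
              (\<forall>\<xi>. cyclic_vector L t \<xi> \<longrightarrow>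
                 atomic_measure (vector_measure (kpaths k L r s c d) (kpath_borel k L r s c d) P \<xi>))"
  proof (intro impI allI)
    fix \<xi> assume "cyclic_vector L t \<xi>"
    hence "closure (cspan (Sc \<xi>)) = UNIV" using cyc by blast
    thus "atomic_measure (vector_measure (kpaths k L r s c d) (kpath_borel k L r s c d) P \<xi>)"
      by (rule atomic[OF _ assms(8)])
  qed
  show ?thesis using part1 part2 by blast
qed

end
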